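(* Let $S$ be a uniform line VN with vertices $1,2,\dots,n$ (edges $\{i,i+1\}$, all demands $1$) and let $T$ be a tree PN on $n$ vertices with nonnegative edge costs. For an embedding $f$, consider the closed-form walk $f(1)\to f(2)\to\cdots\to f(n)$ in $T$ obtained by concatenating the unique tree paths between consecutive images. If there exists an embedding of $S$ on $T$ of minimum cost, then there exists a minimum-cost embedding $g$ of $S$ on $T$ such that in the walk $g(1)\to g(2)\to\cdots\to g(n)$ every edge of $T$ is traversed at most once in each direction.
   Context: Model. A physical network (PN) is an undirected connected graph $G=(V_G,E_G)$ with an edge cost function $t:E_G\to\mathbb{R}_{\ge 0}$. A virtual network (VN) is an undirected connected graph $S=(V_S,E_S)$ with $|V_S|=|V_G|=n$ and a demand function $w:E_S\to\mathbb{N}$. An embedding $f$ of $S$ on $G$ consists of a bijection $f_V:V_S\to V_G$ together with, for every edge $e=\{i,j\}\in E_S$, a single path $f_E(e)$ in $G$ between $f_V(i)$ and $f_V(j)$ (in a tree this path is unique). The cost of a path is the sum of the costs $t$ of its edges, and $\mathrm{Cost}(f)=\sum_{e\in E_S} w_e\cdot \mathrm{cost}(f_E(e))$. A uniform line is a path graph with all demands equal to $1$. *)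

theory Defs
  imports Complex_Main
begin

(* Undirected simple graphs: vertex set V, edge set E of 2-element subsets of V. *)

definition is_walk :: "'v set set \<Rightarrow> 'v list \<Rightarrow> bool" where
  "is_walk E p \<longleftrightarrow> p \<noteq> [] \<and> (\<forall>k. Suc k < length p \<longrightarrow> {p!k, p!Suc k} \<in> E)"

definition is_path :: "'v set set \<Rightarrow> 'v list \<Rightarrow> bool" where
  "is_path E p \<longleftrightarrow> is_walk E p \<and> distinct p"

(* a cycle: closed walk with at least 3 distinct vertices, no repeated vertex except endpoints *)
definition is_cycle :: "'v set set \<Rightarrow> 'v list \<Rightarrow> bool" where
  "is_cycle E p \<longleftrightarrow> is_walk E p \<and> length p \<ge> 4 \<and> hd p = last p \<and> distinct (tl p)"

definition connected_graph :: "'v set \<Rightarrow> 'v set set \<Rightarrow> bool" where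
  "connected_graph V E \<longleftrightarrow>
     (\<forall>u\<in>V. \<forall>v\<in>V. \<exists>p. is_walk E p \<and> hd p = u \<and> last p = v)"

definition is_tree :: "'v set \<Rightarrow> 'v set set \<Rightarrow> bool" where
  "is_tree V E \<longleftrightarrow> finite V \<and> V \<noteq> {} \<and> (\<forall>e\<in>E. e \<subseteq> V \<and> card e = 2)
     \<and> connected_graph V E \<and> (\<nexists>p. is_cycle E p)"

definition tree_path :: "'v set set \<Rightarrow> 'v \<Rightarrow> 'v \<Rightarrow> 'v list" where
  "tree_path E u v = (THE p. is_path E p \<and> hd p = u \<and> last p = v)"

definition path_cost :: "('v set \<Rightarrow> real) \<Rightarrow> 'v list \<Rightarrow> real" where
  "path_cost t p = (\<Sum>k<length p - 1. t {p!k, p!Suc k})"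

definition line_embedding :: "'v set \<Rightarrow> (nat \<Rightarrow> 'v) \<Rightarrow> bool" where
  "line_embedding V f \<longleftrightarrow> bij_betw f {1..card V} V"

(* Cost(f) = sum over line edges {i,i+1} (demand 1) of cost of the tree path *)
definition line_cost :: "'v set \<Rightarrow> 'v set set \<Rightarrow> ('v set \<Rightarrow> real) \<Rightarrow> (nat \<Rightarrow> 'v) \<Rightarrow> real" where
  "line_cost V E t f = (\<Sum>i\<in>{1..<card V}. path_cost t (tree_path E (f i) (f (Suc i))))"

definition line_walk :: "'v set \<Rightarrow> 'v set set \<Rightarrow> (nat \<Rightarrow> 'v) \<Rightarrow> 'v list" where
  "line_walk V E f = f 1 # concat (map (\<lambda>i. tl (tree_path E (f i) (f (Suc i)))) [1..<card V])"

definition traversals :: "'v list \<Rightarrow> 'v \<Rightarrow> 'v \<Rightarrow> nat" where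
  "traversals w u v = card {k. Suc k < length w \<and> w!k = u \<and> w!Suc k = v}"

end

theory Submission
  imports Defs
begin

fun wk :: "'v set set \<Rightarrow> 'v list \<Rightarrow> bool" where
  "wk E [] = False" | "wk E [x] = True" | "wk E (x#y#r) = ({x,y}\<in>E \<and> wk E (y#r))"

lemma is_walk_wk: "is_walk E p = wk E p"
proof (induction E p rule: wk.induct)
  case (1 E) then show ?case by (simp add: is_walk_def)
next
  case (2 E x) then show ?case by (simp add: is_walk_def)
next
  case (3 E x y r)
  have "is_walk E (x#y#r) = ({x,y}\<in>E \<and> is_walk E (y#r))"
    unfolding is_walk_def
    by (auto simp: nth_Cons split: nat.splits)
  then show ?case using 3 by simp
qed

lemma wk_ne: "wk E p \<Longrightarrow> p \<noteq> []" by auto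

lemma wk_append: "p\<noteq>[] \<Longrightarrow> q\<noteq>[] \<Longrightarrow> wk E (p@q) = (wk E p \<and> wk E q \<and> {last p, hd q}\<in>E)"
proof (induction p rule: wk.induct)
  case (2 E x) then show ?case by (cases q) auto
next
  case (3 E x y r) then show ?case by auto
qed auto

lemma wk_join: "wk E p \<Longrightarrow> wk E q \<Longrightarrow> last p = hd q \<Longrightarrow> wk E (p @ tl q)"
proof (cases q)
  case (Cons y r)
  assume a: "wk E p" "wk E q" "last p = hd q"
  show ?thesis
  proof (cases r)
    case Nil then show ?thesis using a Cons by simp
  next
    case (Cons z r')
    then show ?thesis using a \<open>q = y#r\<close> wk_append[of p r E] wk_ne[of E p] by auto
  qed
qed auto

lemma wk_split: "wk E (p @ tl q) \<Longrightarrow> p \<noteq> [] \<Longrightarrow> q \<noteq> [] \<Longrightarrow> last p = hd q \<Longrightarrow> wk E p \<and> wk E q"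
proof -
  assume a: "wk E (p @ tl q)" "p \<noteq> []" "q \<noteq> []" "last p = hd q"
  obtain y r where q: "q = y#r" using a by (cases q) auto
  show ?thesis
  proof (cases r)
    case Nil then show ?thesis using a q by simp
  next
    case (Cons z r')
    then show ?thesis using a q wk_append[of p r E] by auto
  qed
qed

lemma wk_rev: "wk E (rev p) = wk E p"
proof (induction p)
  case (Cons x p)
  show ?case
  proof (cases p)
    case Nil then show ?thesis by simp
  next
    case (Cons y r)
    then show ?thesis using Cons.IH wk_append[of "rev p" "[x]" E]
      by (auto simp: insert_commute last_rev)
  qed
qed simp

fun pc :: "('v set \<Rightarrow> real) \<Rightarrow> 'v list \<Rightarrow> real" where
  "pc t (x#y#r) = t {x,y} + pc t (y#r)" | "pc t _ = 0"

lemma path_cost_pc: "path_cost t p = pc t p"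
proof (induction t p rule: pc.induct)
  case (1 t x y r)
  have "path_cost t (x#y#r) = t{x,y} + path_cost t (y#r)"
    unfolding path_cost_def by (simp add: sum.lessThan_Suc_shift del: sum.lessThan_Suc)
  then show ?case using 1 by simp
qed (auto simp: path_cost_def)

lemma pc_append: "p\<noteq>[] \<Longrightarrow> q\<noteq>[] \<Longrightarrow> pc t (p@q) = pc t p + t{last p, hd q} + pc t q"
proof (induction p rule: induct_list012)
  case (2 x) then show ?case by (cases q) auto
qed auto

lemma pc_join: "p\<noteq>[] \<Longrightarrow> q\<noteq>[] \<Longrightarrow> last p = hd q \<Longrightarrow> pc t (p @ tl q) = pc t p + pc t q"
proof -
  assume a: "p\<noteq>[]" "q\<noteq>[]" "last p = hd q"
  obtain y r where q: "q = y#r" using a by (cases q) auto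
  show ?thesis
  proof (cases r)
    case Nil then show ?thesis using q by simp
  next
    case (Cons z r')
    then show ?thesis using a q pc_append[of p r t] by auto
  qed
qed

lemma pc_rev: "pc t (rev p) = pc t p"
proof (induction p)
  case (Cons x p)
  show ?case
  proof (cases p)
    case Nil then show ?thesis by simp
  next
    case (Cons y r)
    then show ?thesis using Cons.IH pc_append[of "rev p" "[x]" t]
      by (auto simp: insert_commute last_rev)
  qed
qed simp

lemma pc_nonneg: "wk E p \<Longrightarrow> \<forall>e\<in>E. 0 \<le> t e \<Longrightarrow> 0 \<le> pc t p"
  by (induction t p rule: pc.induct) auto

lemma shortcut: "wk E w \<Longrightarrow> \<forall>e\<in>E. 0 \<le> t e \<Longrightarrow>
   \<exists>p. wk E p \<and> distinct p \<and> hd p = hd w \<and> last p = last w \<and> pc t p \<le> pc t w"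
proof (induction w rule: length_induct)
  case (1 w)
  show ?case
  proof (cases "distinct w")
    case True then show ?thesis using 1 by blast
  next
    case False
    then obtain xs ys zs y where w: "w = xs@[y]@ys@[y]@zs" using not_distinct_decomp by blast
    have w2: "w = ((xs@[y]) @ tl (y#ys@[y])) @ tl (y#zs)" using w by simp
    have h1: "wk E ((xs@[y]) @ tl (y#ys@[y])) \<and> wk E (y#zs)"
      using wk_split[of E "(xs@[y]) @ tl (y#ys@[y])" "y#zs"] 1(2) w2 by simp
    have h2: "wk E (xs@[y]) \<and> wk E (y#ys@[y])"
      using wk_split[of E "xs@[y]" "y#ys@[y]"] h1 by simp
    define w' where "w' = (xs@[y]) @ tl (y#zs)"
    have wk': "wk E w'" unfolding w'_def using wk_join h1 h2 by fastforce
    have pcw: "pc t w = pc t (xs@[y]) + pc t (y#ys@[y]) + pc t (y#zs)"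
      using w2 pc_join[of "(xs@[y]) @ tl (y#ys@[y])" "y#zs" t] pc_join[of "xs@[y]" "y#ys@[y]" t]
      by simp
    have pcw': "pc t w' = pc t (xs@[y]) + pc t (y#zs)" unfolding w'_def
      using pc_join[of "xs@[y]" "y#zs" t] by simp
    have "0 \<le> pc t (y#ys@[y])" using pc_nonneg h2 1(3) by blast
    hence le: "pc t w' \<le> pc t w" using pcw pcw' by simp
    have len: "length w' < length w" unfolding w'_def using w by simp
    have hl: "hd w' = hd w" "last w' = last w" unfolding w'_def using w by (cases xs; cases zs; simp)+
    from 1(1)[rule_format, OF len] wk' 1(3) obtain p where
      "wk E p \<and> distinct p \<and> hd p = hd w' \<and> last p = last w' \<and> pc t p \<le> pc t w'" by blast
    then show ?thesis using le hl by (metis order.trans)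
  qed
qed

lemma distinct_hd_last: "distinct q \<Longrightarrow> q \<noteq> [] \<Longrightarrow> hd q = last q \<Longrightarrow> q = [hd q]"
  by (cases q) (auto split: if_splits)

lemma is_path_wk: "is_path E p = (wk E p \<and> distinct p)"
  by (simp add: is_path_def is_walk_wk)

lemma last_join: "p \<noteq> [] \<Longrightarrow> q \<noteq> [] \<Longrightarrow> last p = hd q \<Longrightarrow> last (p @ tl q) = last q"
  by (cases q) auto

lemma hd_join: "p \<noteq> [] \<Longrightarrow> hd (p @ tl q) = hd p"
  by (cases p) auto

locale tr =
  fixes V :: "'v set" and E :: "'v set set"
  assumes tree: "is_tree V E"
begin

lemma edgeV: "{u,v}\<in>E \<Longrightarrow> u\<in>V \<and> v\<in>V \<and> u\<noteq>v"
proof -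
  assume e: "{u,v}\<in>E"
  have "{u,v} \<subseteq> V \<and> card {u,v} = 2" using tree e unfolding is_tree_def by blast
  then show ?thesis by (cases "u=v") auto
qed

lemma nocycle: "\<not> is_cycle E c" using tree unfolding is_tree_def by blast

lemma path_unique: "wk E p \<Longrightarrow> distinct p \<Longrightarrow> wk E q \<Longrightarrow> distinct q \<Longrightarrow> hd p = hd q \<Longrightarrow> last p = last q \<Longrightarrow> p = q"
proof (induction p arbitrary: q)
  case Nil then show ?case by simp
next
  case (Cons x p1)
  show ?case
  proof (cases "p1 = []")
    case True
    then have "hd q = last q" using Cons by simp
    then show ?thesis using distinct_hd_last[of q] Cons True wk_ne by fastforce
  next
    case False
    have lx: "last p1 \<noteq> x" using Cons.prems(2) False by auto
    obtain q1 where q: "q = x # q1" using Cons.prems(5) wk_ne[OF Cons.prems(3)] by (cases q) auto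
    have q1ne: "q1 \<noteq> []" using q Cons.prems(6) lx False by auto
    have lq: "last q1 = last p1" using Cons.prems(6) q q1ne False by simp
    have wp1: "wk E p1" using Cons.prems(1) False by (cases p1) auto
    have wq1: "wk E q1" using Cons.prems(3) q q1ne by (cases q1) auto
    show ?thesis
    proof (cases "hd p1 = hd q1")
      case True
      then have "p1 = q1" using Cons.IH[OF wp1 _ wq1] Cons.prems(2,4) lq q by simp
      then show ?thesis using q by simp
    next
      case hne: False
      have "\<exists>y\<in>set p1. y \<in> set q1" using lq q1ne False by (metis last_in_set)
      then obtain A z B where p1: "p1 = A @ z # B" and zq: "z \<in> set q1" and Aq: "\<forall>y\<in>set A. y \<notin> set q1"
        using split_list_first_prop[of p1 "\<lambda>y. y \<in> set q1"] by blast
      obtain C D where q1s: "q1 = C @ z # D" using split_list[OF zq] by blast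
      define c where "c = (x # A @ [z]) @ tl (z # rev C @ [x])"
      have w1: "wk E (x # A @ [z])"
        using Cons.prems(1) p1 wk_append[of "x#A@[z]" B E] by (cases B) auto
      have w2: "wk E (x # C @ [z])"
        using Cons.prems(3) q q1s wk_append[of "x#C@[z]" D E] by (cases D) auto
      have w2': "wk E (z # rev C @ [x])" using w2 wk_rev[of E "x # C @ [z]"] by simp
      have wc: "wk E c" unfolding c_def using wk_join[OF w1 w2'] by simp
      have d1: "distinct (x # p1)" using Cons.prems(2) by simp
      have d2: "distinct (x # q1)" using Cons.prems(4) q by simp
      have nAC: "A \<noteq> [] \<or> C \<noteq> []" using hne p1 q1s by auto
      have "distinct (tl c)" unfolding c_def using d1 d2 p1 q1s Aq by auto
      moreover have "length c \<ge> 4" unfolding c_def using nAC by (cases A; cases C) auto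
      moreover have "hd c = last c" unfolding c_def by simp
      ultimately have "is_cycle E c" using wc by (simp add: is_cycle_def is_walk_wk)
      then show ?thesis using nocycle by blast
    qed
  qed
qed

lemma path_exists: "x\<in>V \<Longrightarrow> y\<in>V \<Longrightarrow> \<exists>p. wk E p \<and> distinct p \<and> hd p = x \<and> last p = y"
proof -
  assume "x\<in>V" "y\<in>V"
  then obtain w where "is_walk E w" "hd w = x" "last w = y"
    using tree unfolding is_tree_def connected_graph_def by blast
  then show ?thesis using shortcut[of E w "\<lambda>_. 0"] by (auto simp: is_walk_wk)
qed

abbreviation tp where "tp \<equiv> tree_path E"

lemma tp_eq: "wk E p \<Longrightarrow> distinct p \<Longrightarrow> hd p = x \<Longrightarrow> last p = y \<Longrightarrow> tp x y = p"
  unfolding tree_path_def is_path_wk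
  by (rule the_equality) (auto intro: path_unique)

lemma tp_path: "x\<in>V \<Longrightarrow> y\<in>V \<Longrightarrow> wk E (tp x y) \<and> distinct (tp x y) \<and> hd (tp x y) = x \<and> last (tp x y) = y"
  using path_exists tp_eq by metis

lemma tp_ne: "x\<in>V \<Longrightarrow> y\<in>V \<Longrightarrow> tp x y \<noteq> []" using tp_path wk_ne by blast

lemma tp_rev: "x\<in>V \<Longrightarrow> y\<in>V \<Longrightarrow> tp y x = rev (tp x y)"
  using tp_path[of x y] tp_ne[of x y] by (intro tp_eq) (auto simp: wk_rev hd_rev last_rev)

lemma tp_sub1: "x\<in>V \<Longrightarrow> y\<in>V \<Longrightarrow> tp x y = P @ z # Q \<Longrightarrow> tp x z = P @ [z]"
proof -
  assume a: "x\<in>V" "y\<in>V" "tp x y = P @ z # Q"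
  have "wk E (P@[z])" using tp_path[OF a(1,2)] a(3) wk_append[of "P@[z]" Q E] by (cases Q) auto
  then show ?thesis using tp_path[OF a(1,2)] a(3) by (intro tp_eq) (auto simp: hd_append split: if_splits)
qed

lemma tp_sub2: "x\<in>V \<Longrightarrow> y\<in>V \<Longrightarrow> tp x y = P @ z # Q \<Longrightarrow> tp z y = z # Q"
proof -
  assume a: "x\<in>V" "y\<in>V" "tp x y = P @ z # Q"
  have "wk E (z#Q)" using tp_path[OF a(1,2)] a(3) wk_append[of P "z#Q" E] by (cases P) auto
  then show ?thesis using tp_path[OF a(1,2)] a(3) by (intro tp_eq) auto
qed

definition d :: "('v set \<Rightarrow> real) \<Rightarrow> 'v \<Rightarrow> 'v \<Rightarrow> real" where
  "d t x y = pc t (tp x y)"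

lemma d_sym: "x\<in>V \<Longrightarrow> y\<in>V \<Longrightarrow> d t x y = d t y x"
  unfolding d_def using tp_rev pc_rev by metis

lemma d_tri: "\<forall>e\<in>E. 0 \<le> t e \<Longrightarrow> x\<in>V \<Longrightarrow> y\<in>V \<Longrightarrow> z\<in>V \<Longrightarrow> d t x z \<le> d t x y + d t y z"
proof -
  assume a: "\<forall>e\<in>E. 0 \<le> t e" "x\<in>V" "y\<in>V" "z\<in>V"
  define w where "w = tp x y @ tl (tp y z)"
  have "wk E w" unfolding w_def using tp_path a wk_join by metis
  then obtain p where p: "wk E p \<and> distinct p \<and> hd p = hd w \<and> last p = last w \<and> pc t p \<le> pc t w"
    using shortcut a(1) by blast
  have hw: "hd w = x" "last w = z" unfolding w_def
    using tp_path[OF a(2,3)] tp_path[OF a(3,4)] tp_ne[OF a(2,3)] tp_ne[OF a(3,4)]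
      hd_join[of "tp x y" "tp y z"] last_join[of "tp x y" "tp y z"] by simp_all
  have "tp x z = p" using p hw tp_eq by metis
  moreover have "pc t w = d t x y + d t y z" unfolding w_def d_def
    using pc_join tp_path tp_ne a by metis
  ultimately show ?thesis using p unfolding d_def by simp
qed



end

fun cnt :: "'v \<Rightarrow> 'v \<Rightarrow> 'v list \<Rightarrow> nat" where
  "cnt a b (x#y#r) = (if x=a \<and> y=b then 1 else 0) + cnt a b (y#r)" | "cnt a b _ = 0"

lemma traversals_cnt: "traversals w a b = cnt a b w"
proof (induction a b w rule: cnt.induct)
  case (1 a b x y r)
  let ?S = "\<lambda>w. {k. Suc k < length w \<and> w!k = a \<and> w!Suc k = b}"
  have eq: "?S (x#y#r) = (if x=a \<and> y=b then {0} else {}) \<union> Suc ` ?S (y#r)"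
  proof (rule set_eqI)
    fix k
    show "k \<in> ?S (x#y#r) \<longleftrightarrow> k \<in> (if x=a \<and> y=b then {0} else {}) \<union> Suc ` ?S (y#r)"
      by (cases k) (auto simp: image_iff)
  qed
  have fin: "finite (?S (y#r))" by (rule finite_subset[of _ "{..<length (y#r)}"]) auto
  have "card (?S (x#y#r)) = (if x=a \<and> y=b then 1 else 0) + card (?S (y#r))"
    unfolding eq using fin by (auto simp: card_image)
  then show ?case using 1 by (simp add: traversals_def)
qed (auto simp: traversals_def)

lemma cnt_join: "p\<noteq>[] \<Longrightarrow> q\<noteq>[] \<Longrightarrow> last p = hd q \<Longrightarrow> cnt a b (p @ tl q) = cnt a b p + cnt a b q"
proof (induction p rule: induct_list012)
  case (2 x) then show ?case by (cases q) auto
next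
  case (3 x y r) then show ?case by auto
qed auto

lemma cnt_notin: "a \<notin> set p \<Longrightarrow> cnt a b p = 0"
  by (induction a b p rule: cnt.induct) auto

lemma cnt_distinct: "distinct p \<Longrightarrow> cnt a b p \<le> 1"
  by (induction a b p rule: cnt.induct) (auto simp: cnt_notin)

lemma cnt_pos: "cnt a b p > 0 \<Longrightarrow> \<exists>P Q. p = P @ a # b # Q"
proof (induction a b p rule: cnt.induct)
  case (1 a b x y r)
  show ?case
  proof (cases "x=a \<and> y=b")
    case True then show ?thesis by (metis append_Nil)
  next
    case False
    then obtain P Q where "y#r = P @ a # b # Q" using 1 by auto
    then show ?thesis by (metis append_Cons)
  qed
qed auto

fun desc :: "('v \<Rightarrow> bool) \<Rightarrow> 'v list \<Rightarrow> nat" where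
  "desc s (x#y#r) = (if s x \<and> \<not> s y then 1 else 0) + desc s (y#r)" | "desc s _ = 0"

lemma desc1: "desc s xs \<ge> 1 \<Longrightarrow> \<exists>P x y Q. xs = P@x#y#Q \<and> s x \<and> \<not> s y \<and> desc s (y#Q) + 1 = desc s xs"
proof (induction s xs rule: desc.induct)
  case (1 s x y r)
  show ?case
  proof (cases "s x \<and> \<not> s y")
    case True then show ?thesis
      by (intro exI[of _ "[]"] exI[of _ x] exI[of _ y] exI[of _ r]) simp
  next
    case False
    have "desc s (y#r) \<ge> 1" using 1(2) False by simp
    then obtain P x' y' Q where h: "y#r = P@x'#y'#Q \<and> s x' \<and> \<not> s y' \<and> desc s (y'#Q) + 1 = desc s (y#r)"
      using 1(1) by blast
    have "desc s (x#y#r) = desc s (y#r)" using False by simp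
    then show ?thesis using h
      by (intro exI[of _ "x#P"] exI[of _ x'] exI[of _ y'] exI[of _ Q]) simp
  qed
qed auto

lemma desc3: "s z \<Longrightarrow> desc s (z#Q) \<ge> 1 \<Longrightarrow> \<exists>A u Q'. z#Q = A @ u # Q' \<and> A \<noteq> [] \<and> (\<forall>v\<in>set A. s v) \<and> \<not> s u"
proof (induction Q arbitrary: z)
  case (Cons w Q)
  show ?case
  proof (cases "s w")
    case False then show ?thesis using Cons.prems by (intro exI[of _ "[z]"]) auto
  next
    case True
    have "desc s (w#Q) \<ge> 1" using Cons.prems True by simp
    then obtain A u Q' where "w#Q = A @ u # Q' \<and> A \<noteq> [] \<and> (\<forall>v\<in>set A. s v) \<and> \<not> s u"
      using Cons.IH[OF True] by blast
    then show ?thesis using Cons.prems by (intro exI[of _ "z#A"]) auto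
  qed
qed auto

lemma desc2: "\<not> s y \<Longrightarrow> desc s (y#Q) \<ge> 1 \<Longrightarrow> \<exists>B A u Q'. y#Q = B @ A @ u # Q' \<and> B \<noteq> [] \<and> \<not> s (hd B) \<and> \<not> s (last B)
   \<and> A \<noteq> [] \<and> s (hd A) \<and> s (last A) \<and> \<not> s u"
proof (induction Q arbitrary: y)
  case (Cons z Q)
  show ?case
  proof (cases "s z")
    case True
    then obtain A u Q' where h: "z#Q = A @ u # Q' \<and> A \<noteq> [] \<and> (\<forall>v\<in>set A. s v) \<and> \<not> s u"
      using desc3[of s z Q] Cons.prems by auto
    then show ?thesis using Cons.prems
      by (intro exI[of _ "[y]"] exI[of _ A] exI[of _ u] exI[of _ Q']) auto
  next
    case False
    have "desc s (z#Q) \<ge> 1" using Cons.prems False by simp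
    then obtain B A u Q' where h: "z#Q = B @ A @ u # Q' \<and> B \<noteq> [] \<and> \<not> s (hd B) \<and> \<not> s (last B)
      \<and> A \<noteq> [] \<and> s (hd A) \<and> s (last A) \<and> \<not> s u" using Cons.IH[OF False] by blast
    then show ?thesis using Cons.prems
      by (intro exI[of _ "y#B"] exI[of _ A] exI[of _ u] exI[of _ Q']) auto
  qed
qed auto

lemma desc_decomp: "desc s xs \<ge> 2 \<Longrightarrow> \<exists>P x B A u Q. xs = P @ x # B @ A @ u # Q \<and> s x \<and> B \<noteq> [] \<and> \<not> s (hd B) \<and> \<not> s (last B)
   \<and> A \<noteq> [] \<and> s (hd A) \<and> s (last A) \<and> \<not> s u"
proof -
  assume a: "desc s xs \<ge> 2"
  then obtain P x y Q where h: "xs = P@x#y#Q \<and> s x \<and> \<not> s y \<and> desc s (y#Q) + 1 = desc s xs"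
    using desc1[of s xs] by auto
  then obtain B A u Q' where h2: "y#Q = B @ A @ u # Q' \<and> B \<noteq> [] \<and> \<not> s (hd B) \<and> \<not> s (last B)
   \<and> A \<noteq> [] \<and> s (hd A) \<and> s (last A) \<and> \<not> s u" using desc2[of s y Q] a by auto
  show ?thesis using h h2 by (intro exI[of _ P] exI[of _ x] exI[of _ B] exI[of _ A] exI[of _ u] exI[of _ Q']) simp
qed

context tr begin

fun lc :: "('v set \<Rightarrow> real) \<Rightarrow> 'v list \<Rightarrow> real" where
  "lc t (x#y#r) = d t x y + lc t (y#r)" | "lc t _ = 0"

lemma lc_append: "p\<noteq>[] \<Longrightarrow> q\<noteq>[] \<Longrightarrow> lc t (p@q) = lc t p + d t (last p) (hd q) + lc t q"
proof (induction p rule: induct_list012)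
  case (2 x) then show ?case by (cases q) auto
qed auto

definition Wk :: "'v \<Rightarrow> 'v list \<Rightarrow> 'v list" where
  "Wk x r = x # concat (map (\<lambda>(u,v). tl (tp u v)) (zip (x#r) r))"

lemma Wk_Cons: "x\<in>V \<Longrightarrow> y\<in>V \<Longrightarrow> Wk x (y#r) = tp x y @ tl (Wk y r)"
proof -
  assume "x\<in>V" "y\<in>V"
  then have "tp x y = x # tl (tp x y)" using tp_path tp_ne by (metis list.collapse)
  moreover have "Wk x (y#r) = x # tl (tp x y) @ tl (Wk y r)" unfolding Wk_def by simp
  ultimately show ?thesis by (metis append_Cons)
qed

lemma wk_V: "wk E p \<Longrightarrow> hd p \<in> V \<Longrightarrow> set p \<subseteq> V"
  by (induction p rule: induct_list012) (auto dest: edgeV)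

lemma tp_V: "x\<in>V \<Longrightarrow> y\<in>V \<Longrightarrow> set (tp x y) \<subseteq> V"
  using wk_V tp_path by metis

end

locale tre = tr +
  fixes a b assumes ab: "{a,b} \<in> E"
begin

lemma aV: "a\<in>V" and bV: "b\<in>V" and anb: "a\<noteq>b" using edgeV[OF ab] by auto

definition sd where "sd x \<longleftrightarrow> b \<notin> set (tp x a)"

lemma dich: "x\<in>V \<Longrightarrow> (sd x \<and> tp x b = tp x a @ [b]) \<or> (\<not> sd x \<and> tp x a = tp x b @ [a])"
proof -
  assume x: "x\<in>V"
  have p: "wk E (tp x a) \<and> distinct (tp x a) \<and> hd (tp x a) = x \<and> last (tp x a) = a"
    using tp_path[OF x aV] .
  have ne: "tp x a \<noteq> []" using tp_ne[OF x aV] .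
  show ?thesis
  proof (cases "sd x")
    case True
    then have "b \<notin> set (tp x a)" unfolding sd_def by simp
    moreover have "wk E (tp x a @ [b])" using p ne wk_append[of "tp x a" "[b]" E] ab by simp
    ultimately have "tp x b = tp x a @ [b]" using p ne by (intro tp_eq) auto
    then show ?thesis using True by simp
  next
    case False
    then have "b \<in> set (tp x a)" unfolding sd_def by simp
    then obtain P Q where PQ: "tp x a = P @ b # Q" by (meson split_list)
    have 1: "tp x b = P @ [b]" using tp_sub1[OF x aV PQ] .
    have 2: "tp b a = b # Q" using tp_sub2[OF x aV PQ] .
    have "wk E [b,a]" using ab by (simp add: insert_commute)
    then have "tp b a = [b,a]" using anb by (intro tp_eq) auto
    then have "Q = [a]" using 2 by simp
    then show ?thesis using False PQ 1 by simp
  qed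
qed

lemma sd_a: "x\<in>V \<Longrightarrow> \<not> sd x \<Longrightarrow> a \<notin> set (tp x b)"
  using dich[of x] tp_path[of x a] aV by auto

lemma sd_b: "x\<in>V \<Longrightarrow> sd x \<Longrightarrow> a \<in> set (tp x b)"
proof -
  assume x: "x\<in>V" "sd x"
  have "a \<in> set (tp x a)" using tp_path[OF x(1) aV] tp_ne[OF x(1) aV] last_in_set by metis
  then show ?thesis using dich[OF x(1)] x(2) by auto
qed

lemma split_path: "x\<in>V \<Longrightarrow> y\<in>V \<Longrightarrow> sd x \<Longrightarrow> \<not> sd y \<Longrightarrow> tp x y = tp x a @ tp b y"
proof -
  assume a: "x\<in>V" "y\<in>V" "sd x" "\<not> sd y"
  have px: "wk E (tp x a) \<and> distinct (tp x a) \<and> hd (tp x a) = x \<and> last (tp x a) = a"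
    using tp_path[OF a(1) aV] .
  have py: "wk E (tp b y) \<and> distinct (tp b y) \<and> hd (tp b y) = b \<and> last (tp b y) = y"
    using tp_path[OF bV a(2)] .
  have nx: "tp x a \<noteq> []" "tp b y \<noteq> []" using tp_ne a aV bV by auto
  have disj: "set (tp x a) \<inter> set (tp b y) = {}"
  proof (rule ccontr)
    assume "set (tp x a) \<inter> set (tp b y) \<noteq> {}"
    then obtain z where z1: "z \<in> set (tp x a)" and z2: "z \<in> set (tp b y)" by blast
    have zV: "z \<in> V" using z1 tp_V[OF a(1) aV] by blast
    obtain P Q where PQ: "tp x a = P @ z # Q" using z1 by (meson split_list)
    have "tp z a = z # Q" using tp_sub2[OF a(1) aV PQ] .
    moreover have "b \<notin> set (tp x a)" using a(3) unfolding sd_def by simp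
    ultimately have sz: "sd z" unfolding sd_def using PQ by simp
    obtain P' Q' where PQ': "tp b y = P' @ z # Q'" using z2 by (meson split_list)
    have "tp b z = P' @ [z]" using tp_sub1[OF bV a(2) PQ'] .
    moreover have "a \<notin> set (tp b y)" using sd_a[OF a(2) a(4)] tp_rev[OF a(2) bV] by simp
    ultimately have "a \<notin> set (tp z b)" using tp_rev[OF bV zV] PQ' by auto
    then show False using sd_b[OF zV sz] by simp
  qed
  have "wk E (tp x a @ tp b y)" using px py nx wk_append[of "tp x a" "tp b y" E] ab by simp
  then show ?thesis using px py nx disj by (intro tp_eq) auto
qed

end

context tre begin

lemma cnt_tp: "x\<in>V \<Longrightarrow> y\<in>V \<Longrightarrow> cnt a b (tp x y) \<le> (if sd x \<and> \<not> sd y then 1 else 0)"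
proof -
  assume xy: "x\<in>V" "y\<in>V"
  have dp: "distinct (tp x y)" using tp_path[OF xy] by simp
  show ?thesis
  proof (cases "cnt a b (tp x y) = 0")
    case True then show ?thesis by simp
  next
    case False
    then obtain P Q where PQ: "tp x y = P @ a # b # Q" using cnt_pos[of a b "tp x y"] by auto
    have "tp x a = P @ [a]" using tp_sub1[OF xy PQ] .
    moreover have "b \<notin> set (P @ [a])" using dp PQ anb by auto
    ultimately have sx: "sd x" unfolding sd_def by simp
    have PQ2: "tp x y = (P @ [a]) @ b # Q" using PQ by simp
    have tb: "tp b y = b # Q" using tp_sub2[OF xy PQ2] .
    have "\<not> sd y"
    proof
      assume "sd y"
      then have "a \<in> set (tp y b)" using sd_b[OF xy(2)] by simp
      then have "a \<in> set (b # Q)" using tp_rev[OF bV xy(2)] tb by simp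
      then show False using dp PQ anb by auto
    qed
    then show ?thesis using sx cnt_distinct[OF dp, of a b] by simp
  qed
qed

lemma cnt_W: "set (x#r) \<subseteq> V \<Longrightarrow> cnt a b (Wk x r) \<le> desc sd (x#r)"
proof (induction r arbitrary: x)
  case Nil then show ?case by (simp add: Wk_def)
next
  case (Cons y r)
  have xy: "x\<in>V" "y\<in>V" using Cons.prems by auto
  have ne: "Wk y r \<noteq> []" "hd (Wk y r) = y" by (simp_all add: Wk_def)
  have "cnt a b (Wk x (y#r)) = cnt a b (tp x y) + cnt a b (Wk y r)"
    unfolding Wk_Cons[OF xy] using cnt_join[of "tp x y" "Wk y r" a b] tp_ne[OF xy] tp_path[OF xy] ne by simp
  also have "\<dots> \<le> (if sd x \<and> \<not> sd y then 1 else 0) + desc sd (y#r)"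
    using cnt_tp[OF xy] Cons.IH[of y] Cons.prems by simp
  finally show ?case by simp
qed

lemma d_split: "x\<in>V \<Longrightarrow> y\<in>V \<Longrightarrow> sd x \<Longrightarrow> \<not> sd y \<Longrightarrow> d t x y = d t x a + t{a,b} + d t b y"
  unfolding d_def using split_path[of x y] pc_append[of "tp x a" "tp b y" t] tp_ne[of x a] tp_ne[of b y]
    tp_path[of x a] tp_path[of b y] aV bV by simp

lemma swap:
  assumes t: "\<forall>e\<in>E. 0 \<le> t e" and V: "set (P @ x # B @ A @ s # Q) \<subseteq> V"
    and h: "sd x" "B \<noteq> []" "\<not> sd (hd B)" "\<not> sd (last B)" "A \<noteq> []" "sd (hd A)" "sd (last A)" "\<not> sd s"
  shows "lc t (P @ x # A @ B @ s # Q) + 2 * t{a,b} \<le> lc t (P @ x # B @ A @ s # Q)"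
proof -
  have inV: "x\<in>V" "hd B \<in> V" "last B \<in> V" "hd A \<in> V" "last A \<in> V" "s\<in>V"
    using V h by auto
  have e1: "lc t (P @ x # B @ A @ s # Q) = lc t (P@[x]) + d t x (hd B) + lc t B + d t (last B) (hd A) + lc t A + d t (last A) s + lc t (s#Q)"
  proof -
    have "P @ x # B @ A @ s # Q = (P@[x]) @ (B @ (A @ (s#Q)))" by simp
    then show ?thesis using h lc_append[of "P@[x]" "B @ (A @ (s#Q))" t] lc_append[of B "A @ (s#Q)" t]
      lc_append[of A "s#Q" t] by simp
  qed
  have e2: "lc t (P @ x # A @ B @ s # Q) = lc t (P@[x]) + d t x (hd A) + lc t A + d t (last A) (hd B) + lc t B + d t (last B) s + lc t (s#Q)"
  proof -
    have "P @ x # A @ B @ s # Q = (P@[x]) @ (A @ (B @ (s#Q)))" by simp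
    then show ?thesis using h lc_append[of "P@[x]" "A @ (B @ (s#Q))" t] lc_append[of A "B @ (s#Q)" t]
      lc_append[of B "s#Q" t] by simp
  qed
  have s1: "d t x (hd B) = d t x a + t{a,b} + d t b (hd B)" using d_split inV h by simp
  have s2: "d t (hd A) (last B) = d t (hd A) a + t{a,b} + d t b (last B)" using d_split inV h by simp
  have s3: "d t (last A) s = d t (last A) a + t{a,b} + d t b s" using d_split inV h by simp
  have s4: "d t (last A) (hd B) = d t (last A) a + t{a,b} + d t b (hd B)" using d_split inV h by simp
  have y1: "d t x (hd A) \<le> d t x a + d t a (hd A)" using d_tri[OF t] inV aV by simp
  have y2: "d t (last B) s \<le> d t (last B) b + d t b s" using d_tri[OF t] inV bV by simp
  have m1: "d t (last B) (hd A) = d t (hd A) (last B)" "d t a (hd A) = d t (hd A) a" "d t (last B) b = d t b (last B)"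
    using d_sym inV aV bV by auto
  show ?thesis using e1 e2 s1 s2 s3 s4 y1 y2 m1 by linarith
qed

end

lemma zip_upt: "zip (map g [m..<Suc k]) (map g [Suc m..<Suc k]) = map (\<lambda>i. (g i, g (Suc i))) [m..<k]"
  by (rule nth_equalityI) (auto simp: nth_zip simp del: upt_Suc)

context tr begin

lemma lc_sum: "m \<le> k \<Longrightarrow> lc t (map h [m..<Suc k]) = (\<Sum>i\<in>{m..<k}. d t (h i) (h (Suc i)))"
proof (induction k)
  case 0 then show ?case by simp
next
  case (Suc k)
  show ?case
  proof (cases "m = Suc k")
    case True then show ?thesis by simp
  next
    case False
    then have mk: "m \<le> k" using Suc.prems by simp
    have "map h [m..<Suc (Suc k)] = map h [m..<Suc k] @ [h (Suc k)]" using mk by simp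
    then have "lc t (map h [m..<Suc (Suc k)]) = lc t (map h [m..<Suc k]) + d t (h k) (h (Suc k))"
      using lc_append[of "map h [m..<Suc k]" "[h (Suc k)]" t] mk by (simp add: last_map del: upt_Suc)
    then show ?thesis using Suc.IH[OF mk] mk by simp
  qed
qed

lemma line_cost_lc: "card V \<ge> 1 \<Longrightarrow> line_cost V E t h = lc t (map h [1..<Suc (card V)])"
  using lc_sum[of 1 "card V" t h] unfolding line_cost_def d_def path_cost_pc by simp

lemma line_walk_Wk: "card V \<ge> 1 \<Longrightarrow> line_walk V E h = Wk (h 1) (map h [2..<Suc (card V)])"
proof -
  assume n: "card V \<ge> 1"
  have "map h [1..<Suc (card V)] = h 1 # map h [2..<Suc (card V)]" using n upt_conv_Cons[of 1 "Suc (card V)"] by (simp add: numeral_2_eq_2 del: upt_Suc)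
  then have "zip (h 1 # map h [2..<Suc (card V)]) (map h [2..<Suc (card V)]) = map (\<lambda>i. (h i, h (Suc i))) [1..<card V]"
    using zip_upt[of h 1 "card V"] by (simp add: numeral_2_eq_2)
  then show ?thesis unfolding Wk_def line_walk_def by (simp add: comp_def)
qed

end

theorem lemma2:
  fixes V :: "'v set" and E :: "'v set set" and t :: "'v set \<Rightarrow> real"
  assumes tree: "is_tree V E"
    and nonneg: "\<forall>e\<in>E. t e \<ge> 0"
    and exmin: "\<exists>f. line_embedding V f \<and>
                   (\<forall>h. line_embedding V h \<longrightarrow> line_cost V E t f \<le> line_cost V E t h)"
  shows "\<exists>g. line_embedding V g \<and>
              (\<forall>h. line_embedding V h \<longrightarrow> line_cost V E t g \<le> line_cost V E t h) \<and>
              (\<forall>u v. {u, v} \<in> E \<longrightarrow> traversals (line_walk V E g) u v \<le> 1)"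
proof -
  interpret tr V E using tree by unfold_locales
  define n where "n = card V"
  have finV: "finite V" and neV: "V \<noteq> {}" using tree unfolding is_tree_def by auto
  have n1: "n \<ge> 1" unfolding n_def using finV neV by (simp add: Suc_le_eq card_gt_0_iff)
  define Perm where "Perm = {xs. distinct xs \<and> set xs = V}"
  have lenP: "xs \<in> Perm \<Longrightarrow> length xs = n" for xs unfolding Perm_def n_def using distinct_card by fastforce
  have finP: "finite Perm"
    by (rule finite_subset[of _ "{xs. set xs \<subseteq> V \<and> length xs \<le> n}"])
       (use lenP finV finite_lists_length_le in \<open>auto simp: Perm_def\<close>)
  have neP: "Perm \<noteq> {}" unfolding Perm_def using finite_distinct_list[OF finV] by auto
  define xs0 where "xs0 = arg_min_on (lc t) Perm"
  have xs0: "xs0 \<in> Perm" "\<not>(\<exists>zs\<in>Perm. lc t zs < lc t xs0)"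
    unfolding xs0_def using arg_min_if_finite[OF finP neP] by auto
  define M where "M = {xs\<in>Perm. \<forall>zs\<in>Perm. lc t xs \<le> lc t zs}"
  have finM: "finite M" unfolding M_def using finP by simp
  have neM: "M \<noteq> {}" unfolding M_def using xs0 by force
  define xs1 where "xs1 = arg_min_on (lc (\<lambda>_. 1)) M"
  have xs1: "xs1 \<in> M" "\<not>(\<exists>zs\<in>M. lc (\<lambda>_. 1) zs < lc (\<lambda>_. 1) xs1)"
    unfolding xs1_def using arg_min_if_finite[OF finM neM] by auto
  have xs1P: "distinct xs1" "set xs1 = V" "length xs1 = n" using xs1(1) lenP unfolding M_def Perm_def by auto
  define g where "g = (\<lambda>j. xs1 ! (j - 1))"
  have mapg: "map g [1..<Suc n] = xs1"
    by (rule nth_equalityI) (auto simp: g_def xs1P(3) simp del: upt_Suc)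
  have emb: "line_embedding V g"
    unfolding line_embedding_def n_def[symmetric]
  proof (rule bij_betw_imageI)
    show "inj_on g {1..n}" unfolding g_def inj_on_def using xs1P
      by (auto simp: nth_eq_iff_index_eq)
    show "g ` {1..n} = V"
    proof -
      have "g ` {1..n} = set (map g [1..<Suc n])" by auto
      moreover have "set (map g [1..<Suc n]) = V" using mapg xs1P(2) by metis
      ultimately show ?thesis by simp
    qed
  qed
  have permh: "map h [1..<Suc n] \<in> Perm" if "line_embedding V h" for h
  proof -
    have b: "bij_betw h {1..n} V" using that unfolding line_embedding_def n_def by simp
    have s: "set [1..<Suc n] = {1..n}" by auto
    have "distinct (map h [1..<Suc n])" using b unfolding distinct_map s bij_betw_def by simp
    moreover have "set (map h [1..<Suc n]) = V" using b unfolding set_map s bij_betw_def by simp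
    ultimately show ?thesis unfolding Perm_def by simp
  qed
  have opt: "\<forall>h. line_embedding V h \<longrightarrow> line_cost V E t g \<le> line_cost V E t h"
  proof (intro allI impI)
    fix h assume "line_embedding V h"
    then have "lc t xs1 \<le> lc t (map h [1..<Suc n])" using permh xs1(1) unfolding M_def by blast
    then show "line_cost V E t g \<le> line_cost V E t h"
      using line_cost_lc[of t g] line_cost_lc[of t h] n1 mapg unfolding n_def by simp
  qed
  have trav: "traversals (line_walk V E g) u v \<le> 1" if uv: "{u,v} \<in> E" for u v
  proof -
    interpret T: tre V E u v using uv by unfold_locales
    have xs1c: "xs1 = g 1 # map g [2..<Suc n]" using mapg n1 upt_conv_Cons[of 1 "Suc n"] by (simp add: numeral_2_eq_2 del: upt_Suc)
    have "traversals (line_walk V E g) u v = cnt u v (Wk (g 1) (map g [2..<Suc n]))"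
      unfolding traversals_cnt using line_walk_Wk[of g] n1 unfolding n_def by (simp del: upt_Suc)
    also have "\<dots> \<le> desc T.sd xs1"
    proof -
      have "set (g 1 # map g [2..<Suc n]) \<subseteq> V" using xs1c xs1P(2) by (metis order_refl)
      from T.cnt_W[OF this] show ?thesis using xs1c by metis
    qed
    finally have le: "traversals (line_walk V E g) u v \<le> desc T.sd xs1" .
    have "desc T.sd xs1 \<le> 1"
    proof (rule ccontr)
      assume "\<not> desc T.sd xs1 \<le> 1"
      then have "desc T.sd xs1 \<ge> 2" by simp
      then obtain P x B A s Q where dec: "xs1 = P @ x # B @ A @ s # Q" "T.sd x" "B \<noteq> []" "\<not> T.sd (hd B)" "\<not> T.sd (last B)"
        "A \<noteq> []" "T.sd (hd A)" "T.sd (last A)" "\<not> T.sd s"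
        using desc_decomp[of T.sd xs1] by blast
      define ys where "ys = P @ x # A @ B @ s # Q"
      have ysP: "ys \<in> Perm" unfolding Perm_def ys_def using xs1P dec(1) by auto
      have Vs: "set (P @ x # B @ A @ s # Q) \<subseteq> V" using xs1P dec(1) by simp
      have c1: "lc t ys + 2 * t{u,v} \<le> lc t xs1"
        using T.swap[OF nonneg Vs dec(2-9)] dec(1) unfolding ys_def by simp
      have c2: "lc (\<lambda>_. 1) ys + 2 * 1 \<le> lc (\<lambda>_. 1) xs1"
        using T.swap[of "\<lambda>_. 1", OF _ Vs dec(2-9)] dec(1) unfolding ys_def by simp
      have "t{u,v} \<ge> 0" using nonneg uv by blast
      then have "ys \<in> M" using c1 xs1(1) ysP unfolding M_def by force
      then show False using xs1(2) c2 by force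
    qed
    then show ?thesis using le by simp
  qed
  show ?thesis using emb opt trav by blast
qed

end
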